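(* For every $n\ge 4$, the number of magic quad squares of type C in the EvenQuads-$2^n$ deck is \[10 + 85(2^n-16) + 43(2^n-16)(2^n-32) + (2^n-16)(2^n-32)(2^n-64).\]
   Context: The EvenQuads-$2^n$ deck consists of $2^n$ cards identified with the integers $0,1,\dots,2^n-1$. Four cards $a,b,c,d$ form a quad if and only if $a\oplus b\oplus c\oplus d=0$, where $\oplus$ is bitwise XOR. A quad square is a $4\times4$ array of $16$ pairwise distinct cards; it is magic if each of its four rows, four columns and two diagonals forms a quad. It is of type C if its first row is $0,1,2,3$ (left to right) and its first column is $0,4,8,12$ (top to bottom). *)

theory Defs
  imports Main "HOL-Library.FuncSet"
begin

text \<open>Cards of the EvenQuads-2^n deck are the naturals 0..2^n-1.
  Four cards form a quad iff their bitwise XOR is 0.\<close>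
definition is_quad :: "nat \<Rightarrow> nat \<Rightarrow> nat \<Rightarrow> nat \<Rightarrow> bool" where
  "is_quad a b c d \<longleftrightarrow> xor (xor (xor a b) c) d = 0"

text \<open>A 4x4 array is a function on {0..<4} x {0..<4} (row, column),
  extensional outside this index set.\<close>
definition square_idx :: "(nat \<times> nat) set" where
  "square_idx = {0..<4} \<times> {0..<4}"

definition quad_squares :: "nat \<Rightarrow> (nat \<times> nat \<Rightarrow> nat) set" where
  "quad_squares n = {M \<in> square_idx \<rightarrow>\<^sub>E {0..<2^n}. inj_on M square_idx}"

definition is_magic :: "(nat \<times> nat \<Rightarrow> nat) \<Rightarrow> bool" where
  "is_magic M \<longleftrightarrow>
     (\<forall>i<4. is_quad (M (i,0)) (M (i,1)) (M (i,2)) (M (i,3))) \<and>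
     (\<forall>j<4. is_quad (M (0,j)) (M (1,j)) (M (2,j)) (M (3,j))) \<and>
     is_quad (M (0,0)) (M (1,1)) (M (2,2)) (M (3,3)) \<and>
     is_quad (M (0,3)) (M (1,2)) (M (2,1)) (M (3,0))"

definition is_typeC :: "(nat \<times> nat \<Rightarrow> nat) \<Rightarrow> bool" where
  "is_typeC M \<longleftrightarrow> (\<forall>j<4. M (0,j) = j) \<and> (\<forall>i<4. M (i,0) = 4 * i)"

end

theory Submission imports Defs begin

lemma xor_lt: fixes x y :: nat assumes "x < 2^n" "y < 2^n" shows "xor x y < 2^n"
proof -
  have "take_bit n (xor x y) = xor x y" using assms by (simp add: take_bit_xor take_bit_nat_eq_self)
  moreover have "take_bit n (xor x y) < 2^n" by (rule take_bit_nat_less_exp)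
  ultimately show ?thesis by simp
qed

lemma xor_div16: "(xor (a::nat) b) div 16 = xor (a div 16) (b div 16)"
  using drop_bit_xor[of 4 a b] by (simp add: drop_bit_eq_div)

lemma xor_cancel_left[simp]: "xor (a::nat) (xor a b) = b"
  by (simp flip: xor.assoc)

lemma xor_num: "xor (numeral k) (xor (numeral l) x) = xor (xor (numeral k) (numeral l)) (x::nat)"
  by (rule xor.assoc[symmetric])
lemma xor_num1: "xor (Suc 0) (xor (numeral l) x) = xor (xor 1 (numeral l)) (x::nat)"
  by (metis One_nat_def xor.assoc)

lemma xor_eq0: "xor (a::nat) b = 0 \<longleftrightarrow> a = b"
  by (metis xor_cancel_left xor.right_neutral xor_self_eq)

definition HS :: "nat list" where "HS = [0,0,0,0,0,1,2,3,0,2,4,6,0,3,6,5]"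
definition CS :: "nat list" where "CS = [0,1,2,3,4,0,0,4,8,15,0,7,12,14,2,0]"
definition phiL :: "nat \<Rightarrow> nat \<Rightarrow> nat \<Rightarrow> nat list" where
  "phiL a b d = [0, a, b, xor a b, d, xor a d, xor b d, xor (xor a b) d]"
definition ent :: "nat \<Rightarrow> nat \<Rightarrow> nat \<Rightarrow> nat \<Rightarrow> nat" where
  "ent a b d k = xor (CS!k) (phiL a b d ! (HS!k))"

lemma less8: "(s::nat) < 8 \<longleftrightarrow> s = 0 \<or> s = 1 \<or> s = 2 \<or> s = 3 \<or> s = 4 \<or> s = 5 \<or> s = 6 \<or> s = 7"
  by auto

lemma phi_lin: assumes "s < 8" "t < 8"
  shows "phiL a b d ! (xor s t) = xor (phiL a b d ! s) (phiL a b d ! t)"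
  using assms unfolding less8
  by (auto simp: phiL_def xor.assoc xor.left_commute xor.commute)

lemma HS_lt: "k < 16 \<Longrightarrow> HS ! k < 8"
proof -
  assume "k < 16"
  moreover have "length HS = 16" by (simp add: HS_def)
  ultimately have "HS ! k \<in> set HS" by (metis nth_mem)
  moreover have "\<forall>x\<in>set HS. x < 8" by (simp add: HS_def)
  ultimately show ?thesis by blast
qed

lemma ent_eq: assumes "i < 16" "j < 16"
  shows "ent a b d i = ent a b d j \<longleftrightarrow> phiL a b d ! (xor (HS!i) (HS!j)) = xor (CS!i) (CS!j)"
proof -
  have "ent a b d i = ent a b d j \<longleftrightarrow> xor (ent a b d i) (ent a b d j) = 0" by (simp add: xor_eq0)
  also have "xor (ent a b d i) (ent a b d j) = xor (xor (CS!i) (CS!j)) (phiL a b d ! (xor (HS!i) (HS!j)))"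
    using phi_lin[OF HS_lt[OF assms(1)] HS_lt[OF assms(2)]]
    by (simp add: ent_def xor.assoc xor.left_commute xor.commute)
  also have "\<dots> = 0 \<longleftrightarrow> phiL a b d ! (xor (HS!i) (HS!j)) = xor (CS!i) (CS!j)"
    by (auto simp: xor_eq0)
  finally show ?thesis .
qed

definition Dset :: "nat \<Rightarrow> nat set" where
  "Dset s = set [xor (CS!i) (CS!j). i \<leftarrow> [0..<16], j \<leftarrow> [0..<16], i \<noteq> j \<and> xor (HS!i) (HS!j) = s]"

lemma Dset_mem: "c \<in> Dset s \<longleftrightarrow> (\<exists>i<16. \<exists>j<16. i \<noteq> j \<and> xor (HS!i) (HS!j) = s \<and> c = xor (CS!i) (CS!j))"
proof
  assume "c \<in> Dset s"
  thus "\<exists>i<16. \<exists>j<16. i \<noteq> j \<and> xor (HS!i) (HS!j) = s \<and> c = xor (CS!i) (CS!j)"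
    unfolding Dset_def by (simp only: set_concat set_map) (auto; blast)
next
  assume "\<exists>i<16. \<exists>j<16. i \<noteq> j \<and> xor (HS!i) (HS!j) = s \<and> c = xor (CS!i) (CS!j)"
  then obtain i j where "i<16" "j<16" "i \<noteq> j" "xor (HS!i) (HS!j) = s" "c = xor (CS!i) (CS!j)" by blast
  thus "c \<in> Dset s" unfolding Dset_def by (simp only: set_concat set_map) force
qed

lemma inj_ent: "inj_on (ent a b d) {..<16} \<longleftrightarrow> (\<forall>s<8. phiL a b d ! s \<notin> Dset s)"
proof
  assume inj: "inj_on (ent a b d) {..<16}"
  show "\<forall>s<8. phiL a b d ! s \<notin> Dset s"
  proof (intro allI impI notI)
    fix s assume "s < 8" "phiL a b d ! s \<in> Dset s"
    then obtain i j where ij: "i<16" "j<16" "i\<noteq>j" "xor (HS!i) (HS!j) = s" "phiL a b d ! s = xor (CS!i) (CS!j)"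
      unfolding Dset_mem by blast
    hence "ent a b d i = ent a b d j" using ent_eq by simp
    thus False using inj ij by (auto dest: inj_onD)
  qed
next
  assume H: "\<forall>s<8. phiL a b d ! s \<notin> Dset s"
  show "inj_on (ent a b d) {..<16}"
  proof (rule inj_onI)
    fix i j assume ij: "i \<in> {..<16}" "j \<in> {..<16}" "ent a b d i = ent a b d j"
    show "i = j"
    proof (rule ccontr)
      assume "i \<noteq> j"
      let ?s = "xor (HS!i) (HS!j)"
      have "?s < 8" using HS_lt ij xor_lt[of "HS!i" 3 "HS!j"] by simp
      moreover have "phiL a b d ! ?s \<in> Dset ?s" unfolding Dset_mem
        using ij \<open>i \<noteq> j\<close> ent_eq by auto
      ultimately show False using H by blast
    qed
  qed
qed

definition "D1 = ({0,1,2,3,4,8,11,12,14}::nat set)"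
definition "D2 = ({0,1,2,3,4,7,8,11,12,13,14,15}::nat set)"
definition "D3 = ({0,2,4,5,6,7,8,10,12,13,14,15}::nat set)"
definition "D4 = ({0,1,2,3,4,7,8,12,13}::nat set)"
definition "D5 = ({0,1,2,3,4,6,8,9,12}::nat set)"
definition "D6 = ({0,1,2,3,4,5,6,7,10,11,14,15}::nat set)"
definition "D7 = ({0,2,4,7,14,15}::nat set)"

lemma Dset_vals: "0 \<notin> Dset 0" "Dset 1 = D1" "Dset 2 = D2" "Dset 3 = D3" "Dset 4 = D4"
  "Dset 5 = D5" "Dset 6 = D6" "Dset 7 = D7"
  by (simp_all add: Dset_def upt_rec CS_def HS_def D1_def D2_def D3_def D4_def D5_def D6_def D7_def
     insert_commute numeral_3_eq_3[symmetric])

definition Good :: "nat \<Rightarrow> nat \<Rightarrow> nat \<Rightarrow> bool" where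
  "Good a b d \<longleftrightarrow> a \<notin> D1 \<and> b \<notin> D2 \<and> xor a b \<notin> D3 \<and> d \<notin> D4 \<and> xor a d \<notin> D5 \<and> xor b d \<notin> D6
     \<and> xor (xor a b) d \<notin> D7"

lemma inj_ent_Good: "inj_on (ent a b d) {..<16} \<longleftrightarrow> Good a b d"
  unfolding inj_ent less8 using Dset_vals by (auto simp: Good_def phiL_def)

definition mat :: "nat \<Rightarrow> nat \<Rightarrow> nat \<Rightarrow> nat \<times> nat \<Rightarrow> nat" where
  "mat a b d = restrict (\<lambda>(i,j). ent a b d (4*i+j)) square_idx"

lemma less4: "(i::nat) < 4 \<longleftrightarrow> i = 0 \<or> i = 1 \<or> i = 2 \<or> i = 3" by auto
lemma all_less4: "(\<forall>i::nat<4. P i) \<longleftrightarrow> P 0 \<and> P 1 \<and> P 2 \<and> P 3" unfolding less4 by auto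

lemma idx_img: "(\<lambda>(i,j). 4*i+j) ` square_idx = {..<(16::nat)}"
proof
  show "(\<lambda>(i,j). 4*i+j) ` square_idx \<subseteq> {..<(16::nat)}" by (auto simp: square_idx_def)
  show "{..<(16::nat)} \<subseteq> (\<lambda>(i,j). 4*i+j) ` square_idx"
  proof
    fix k :: nat assume "k \<in> {..<16}"
    hence "(k div 4, k mod 4) \<in> square_idx" "k = (\<lambda>(i,j). 4*i+j) (k div 4, k mod 4)"
      by (auto simp: square_idx_def)
    thus "k \<in> (\<lambda>(i,j). 4*i+j) ` square_idx" by blast
  qed
qed

lemma idx_inj: "inj_on (\<lambda>(i,j). 4*i+(j::nat)) square_idx"
proof (rule inj_onI, clarify)
  fix i j i' j' :: nat
  assume "(i,j) \<in> square_idx" "(i',j') \<in> square_idx" "4*i+j = 4*i'+j'"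
  hence h: "j < 4" "j' < 4" "4*i+j = 4*i'+j'" by (auto simp: square_idx_def)
  have "i = (4*i+j) div 4" "j = (4*i+j) mod 4" using h(1) by simp_all
  moreover have "i' = (4*i'+j') div 4" "j' = (4*i'+j') mod 4" using h(2) by simp_all
  ultimately show "i = i' \<and> j = j'" using h(3) by metis
qed

lemma inj_mat: "inj_on (mat a b d) square_idx \<longleftrightarrow> Good a b d"
proof -
  have "inj_on (mat a b d) square_idx \<longleftrightarrow> inj_on (ent a b d \<circ> (\<lambda>(i,j). 4*i+j)) square_idx"
    by (rule inj_on_cong) (auto simp: mat_def)
  also have "\<dots> \<longleftrightarrow> inj_on (ent a b d) {..<16}"
    using comp_inj_on_iff[OF idx_inj, of "ent a b d"] idx_img by simp
  finally show ?thesis using inj_ent_Good by simp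
qed

lemma CS_lt: "k < 16 \<Longrightarrow> CS ! k < 16"
proof -
  assume "k < 16"
  moreover have "length CS = 16" by (simp add: CS_def)
  ultimately have "CS ! k \<in> set CS" by (metis nth_mem)
  moreover have "\<forall>x\<in>set CS. x < 16" by (simp add: CS_def)
  ultimately show ?thesis by blast
qed

lemma ent_lt: assumes "4 \<le> n" "a < 2^n" "b < 2^n" "d < 2^n" "k < 16"
  shows "ent a b d k < 2^n"
proof -
  have "(16::nat) \<le> 2^n" using power_increasing[OF assms(1), of "2::nat"] by simp
  hence c: "CS ! k < 2^n" using CS_lt[OF assms(5)] by linarith
  have "phiL a b d ! s < 2^n" if "s < 8" for s
    using that assms unfolding less8 by (auto simp: phiL_def intro!: xor_lt)
  hence "phiL a b d ! (HS ! k) < 2^n" using HS_lt[OF assms(5)] by blast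
  thus ?thesis using c by (simp add: ent_def xor_lt)
qed

lemma mat_in: assumes "4 \<le> n" "a < 2^n" "b < 2^n" "d < 2^n" "Good a b d"
  shows "mat a b d \<in> quad_squares n"
  unfolding quad_squares_def
proof (intro CollectI conjI)
  show "inj_on (mat a b d) square_idx" using assms(5) inj_mat by simp
  show "mat a b d \<in> square_idx \<rightarrow>\<^sub>E {0..<2^n}"
    unfolding mat_def
  proof (rule restrict_PiE_iff[THEN iffD2], intro ballI)
    fix p assume "p \<in> square_idx"
    then obtain i j where p: "p = (i,j)" "i < 4" "j < 4" by (auto simp: square_idx_def)
    hence "4*i+j < 16" by simp
    thus "(\<lambda>(i,j). ent a b d (4*i+j)) p \<in> {0..<2^n}" using ent_lt[OF assms(1-4)] p by simp
  qed
qed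

lemma mat_magic: "is_magic (mat a b d) \<and> is_typeC (mat a b d)"
  unfolding is_magic_def is_typeC_def is_quad_def mat_def all_less4
  by (simp add: square_idx_def ent_def CS_def HS_def phiL_def xor.assoc xor.left_commute xor.commute xor_num xor_num1)

lemma quad_last: "is_quad p q r s \<Longrightarrow> s = xor (xor p q) (r::nat)"
  unfolding is_quad_def by (simp add: xor_eq0)
lemma quad_third: "is_quad p q r s \<Longrightarrow> r = xor (xor p q) (s::nat)"
proof -
  assume "is_quad p q r s"
  hence "xor (xor (xor p q) r) s = 0" by (simp add: is_quad_def)
  hence "xor (xor p q) r = s" by (simp add: xor_eq0)
  hence "xor (xor p q) (xor (xor p q) r) = xor (xor p q) s" by simp
  thus ?thesis by simp
qed

lemma mat_unique: assumes "M \<in> quad_squares n" "is_magic M" "is_typeC M"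
  shows "M = mat (M(1,1)) (M(1,2)) (M(2,2))"
proof
  fix p
  obtain i j :: nat where p: "p = (i,j)" by force
  show "M p = mat (M(1,1)) (M(1,2)) (M(2,2)) p"
  proof (cases "p \<in> square_idx")
    case False
    thus ?thesis using assms(1) p by (auto simp: quad_squares_def mat_def PiE_def extensional_def)
  next
    case True
    hence ij: "i < 4" "j < 4" using p by (auto simp: square_idx_def)
    define a where "a = M(1,1)"
    define b where "b = M(1,2)"
    define d where "d = M(2,2)"
    have t: "M(0,0) = 0" "M(0,1) = 1" "M(0,2) = 2" "M(0,3) = 3" "M(1,0) = 4" "M(2,0) = 8" "M(3,0) = 12"
      using assms(3) unfolding is_typeC_def all_less4 by auto
    have m: "is_quad (M (i,0)) (M (i,1)) (M (i,2)) (M (i,3))" "is_quad (M (0,j)) (M (1,j)) (M (2,j)) (M (3,j))"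
      "is_quad (M (0,3)) (M (1,2)) (M (2,1)) (M (3,0))" if "i < 4" "j < 4" for i j
      using assms(2) that unfolding is_magic_def by auto
    have c0: "M(2,1) = xor (xor 3 b) 12"
      using quad_third[OF m(3)[of 0 0]] t unfolding b_def by simp
    have n15: "xor (12::nat) 3 = 15" by simp
    have "xor (xor 3 b) (12::nat) = xor 12 (xor 3 b)" by (rule xor.commute)
    also have "\<dots> = xor (xor 12 3) b" by (rule xor.assoc[symmetric])
    also have "\<dots> = xor 15 b" by (simp only: n15)
    finally have c: "M(2,1) = xor 15 b" unfolding c0 .
    have e13: "M(1,3) = xor (xor 4 a) b" using quad_last[OF m(1)[of 1 0]] t unfolding a_def b_def by simp
    have e23: "M(2,3) = xor (xor 8 (xor 15 b)) d" using quad_last[OF m(1)[of 2 0]] t c unfolding d_def by simp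
    have e31: "M(3,1) = xor (xor 1 a) (xor 15 b)" using quad_last[OF m(2)[of 0 1]] t c unfolding a_def by simp
    have e32: "M(3,2) = xor (xor 2 b) d" using quad_last[OF m(2)[of 0 2]] t unfolding b_def d_def by simp
    have e33: "M(3,3) = xor (xor 12 (M(3,1))) (M(3,2))" using quad_last[OF m(1)[of 3 0]] t by simp
    have all: "\<forall>i<4. \<forall>j<4. M(i,j) = ent a b d (4*i+j)" unfolding all_less4
      using t c e13 e23 e31 e32 e33 a_def b_def d_def unfolding One_nat_def
      by (simp add: ent_def CS_def HS_def phiL_def xor.assoc xor.left_commute xor.commute xor_num xor_num1)
    have f1: "M (i,j) = ent a b d (4*i+j)" using all ij by blast
    have f2: "mat a b d (i,j) = ent a b d (4*i+j)" using True p by (simp add: mat_def)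
    have f3: "mat (M(1,1)) (M(1,2)) (M(2,2)) = mat a b d" by (simp only: a_def b_def d_def)
    show ?thesis by (simp only: p f3 f1 f2)
  qed
qed

definition Tset :: "nat \<Rightarrow> (nat \<times> nat \<times> nat) set" where
  "Tset N = {(a,b,d). a < N \<and> b < N \<and> d < N \<and> Good a b d}"

lemma card_LHS: assumes "4 \<le> n"
  shows "card {M \<in> quad_squares n. is_magic M \<and> is_typeC M} = card (Tset (2^n))"
proof -
  let ?f = "\<lambda>(a,b,d). mat a b d"
  have eq: "{M \<in> quad_squares n. is_magic M \<and> is_typeC M} = ?f ` Tset (2^n)"
  proof
    show "{M \<in> quad_squares n. is_magic M \<and> is_typeC M} \<subseteq> ?f ` Tset (2^n)"
    proof
      fix M assume M: "M \<in> {M \<in> quad_squares n. is_magic M \<and> is_typeC M}"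
      hence Meq: "M = mat (M(1,1)) (M(1,2)) (M(2,2))" using mat_unique by blast
      have PM: "M \<in> square_idx \<rightarrow>\<^sub>E {0..<2^n}" "inj_on M square_idx" using M by (auto simp: quad_squares_def)
      have "(1,1) \<in> square_idx" "(1,2) \<in> square_idx" "(2,2) \<in> square_idx" by (auto simp: square_idx_def)
      hence lt: "M(1,1) < 2^n" "M(1,2) < 2^n" "M(2,2) < 2^n" using PM(1) by (auto simp: PiE_def Pi_def)
      have "Good (M(1,1)) (M(1,2)) (M(2,2))" using PM(2) Meq inj_mat by metis
      hence "(M(1,1), M(1,2), M(2,2)) \<in> Tset (2^n)" using lt by (simp add: Tset_def)
      thus "M \<in> ?f ` Tset (2^n)" using Meq by force
    qed
    show "?f ` Tset (2^n) \<subseteq> {M \<in> quad_squares n. is_magic M \<and> is_typeC M}"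
      using mat_in[OF assms] mat_magic by (auto simp: Tset_def)
  qed
  have inj: "inj_on ?f (Tset (2^n))"
  proof (rule inj_onI)
    fix x y assume xy: "?f x = ?f y"
    obtain a b d where x: "x = (a,b,d)" by (cases x) auto
    obtain a' b' d' where y: "y = (a',b',d')" by (cases y) auto
    have "mat a b d = mat a' b' d'" using xy x y by simp
    hence "mat a b d (1,1) = mat a' b' d' (1,1)" "mat a b d (1,2) = mat a' b' d' (1,2)"
      "mat a b d (2,2) = mat a' b' d' (2,2)" by auto
    hence "a = a' \<and> b = b' \<and> d = d'"
      by (simp add: mat_def square_idx_def ent_def CS_def HS_def phiL_def)
    thus "x = y" using x y by simp
  qed
  show ?thesis using card_image[OF inj] eq by simp
qed

definition Qp :: "nat \<Rightarrow> nat \<Rightarrow> bool" where "Qp a b \<longleftrightarrow> a \<notin> D1 \<and> b \<notin> D2 \<and> xor a b \<notin> D3"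
definition U :: "nat \<Rightarrow> nat \<Rightarrow> nat set" where
  "U a b = D4 \<union> xor a ` D5 \<union> xor b ` D6 \<union> xor (xor a b) ` D7"
definition F :: "nat \<Rightarrow> nat \<Rightarrow> nat \<Rightarrow> int" where
  "F N a b = (if Qp a b then int N - int (card (U a b)) else 0)"

lemma sum16: "(\<Sum>a<(16::nat). f a) = sum_list (map f [0..<16])"
  by (simp only: atLeast0LessThan[symmetric] atLeastLessThan_upt sum_set_upt_conv_sum_list_nat)
lemma upt16: "[0..<16] = [0,1,2,3,4,5,6,7,8,9,10,11,12,13,14,15::nat]" by (simp add: upt_rec)

lemma S1: "(\<Sum>a<16. \<Sum>b<16. F N a b) = 7 * int N - 102"
  unfolding sum16 upt16
  by (simp add: F_def Qp_def U_def D1_def D2_def D3_def D4_def D5_def D6_def D7_def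
      numeral_3_eq_3[symmetric] card_insert_if cong: if_weak_cong)

definition G2 :: "nat \<Rightarrow> nat \<Rightarrow> int" where
  "G2 N a = (if a \<notin> D1 then int N - (int (card (D4 \<union> xor a ` D5)) + int (card (D6 \<union> xor a ` D7))) else 0)"
definition G3 :: "nat \<Rightarrow> nat \<Rightarrow> int" where
  "G3 N b = (if b \<notin> D2 then int N - (int (card (D4 \<union> xor b ` D6)) + int (card (D5 \<union> xor b ` D7))) else 0)"
definition G4 :: "nat \<Rightarrow> nat \<Rightarrow> int" where
  "G4 N w = (if w \<notin> D3 then int N - (int (card (D4 \<union> xor w ` D7)) + int (card (D5 \<union> xor w ` D6))) else 0)"

lemma S2: "(\<Sum>a<16. G2 N a) = 7 * int N - 192"
  unfolding sum16 upt16
  by (simp add: G2_def D1_def D2_def D3_def D4_def D5_def D6_def D7_def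
      numeral_3_eq_3[symmetric] card_insert_if cong: if_weak_cong)
lemma S3: "(\<Sum>a<16. G3 N a) = 4 * int N - 105"
  unfolding sum16 upt16
  by (simp add: G3_def D1_def D2_def D3_def D4_def D5_def D6_def D7_def
      numeral_3_eq_3[symmetric] card_insert_if cong: if_weak_cong)
lemma S4: "(\<Sum>a<16. G4 N a) = 4 * int N - 105"
  unfolding sum16 upt16
  by (simp add: G4_def D1_def D2_def D3_def D4_def D5_def D6_def D7_def
      numeral_3_eq_3[symmetric] card_insert_if cong: if_weak_cong)

lemma D_sub: "D1 \<subseteq> {..<16}" "D2 \<subseteq> {..<16}" "D3 \<subseteq> {..<16}" "D4 \<subseteq> {..<16}"
  "D5 \<subseteq> {..<16}" "D6 \<subseteq> {..<16}" "D7 \<subseteq> {..<16}"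
  by (auto simp: D1_def D2_def D3_def D4_def D5_def D6_def D7_def)
lemma D_fin: "finite D4" "finite D5" "finite D6" "finite D7"
  by (auto simp: D4_def D5_def D6_def D7_def)
lemma D_card: "card D4 = 9" "card D5 = 9" "card D6 = 12" "card D7 = 6"
  by (simp_all add: D4_def D5_def D6_def D7_def)

lemma xor_small_div: "(e::nat) < 16 \<Longrightarrow> xor c e div 16 = c div 16"
  by (simp add: xor_div16)
lemma img_div: "S \<subseteq> {..<16} \<Longrightarrow> x \<in> xor c ` S \<Longrightarrow> x div 16 = (c::nat) div 16"
  using xor_small_div by auto
lemma big_notin: "S \<subseteq> {..<16} \<Longrightarrow> (x::nat) div 16 \<noteq> 0 \<Longrightarrow> x \<notin> S"
  by auto
lemma xor_img_mem: "x \<in> xor c ` S \<longleftrightarrow> xor c x \<in> (S::nat set)"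
proof
  assume "x \<in> xor c ` S" thus "xor c x \<in> S" by auto
next
  assume "xor c x \<in> S"
  hence "xor c (xor c x) \<in> xor c ` S" by blast
  thus "x \<in> xor c ` S" by simp
qed
lemma inj_xor: "inj_on (xor (c::nat)) S"
  by (rule inj_onI) (metis xor_cancel_left)
lemma card_xor_img: "card (xor (c::nat) ` S) = card S"
  by (rule card_image[OF inj_xor])
lemma small_img: "(c::nat) < 16 \<Longrightarrow> S \<subseteq> {..<16} \<Longrightarrow> xor c ` S \<subseteq> {..<16}"
  using xor_lt[of c 4] by fastforce
lemma xor_img_img: "xor c ` xor c' ` S = xor (xor c c') ` (S::nat set)"
  by (simp add: image_image xor.assoc)

lemma N16: "4 \<le> n \<Longrightarrow> (16::nat) \<le> 2^n"
  using power_increasing[of 4 n "2::nat"] by simp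

lemma card_T: "card (Tset N) = (\<Sum>a<N. \<Sum>b<N. card {d. d < N \<and> Good a b d})"
proof -
  have "Tset N = (SIGMA a:{..<N}. SIGMA b:{..<N}. {d. d < N \<and> Good a b d})"
    by (auto simp: Tset_def)
  thus ?thesis by (simp add: card_SigmaI)
qed

lemma inner: assumes "4 \<le> n" "a < 2^n" "b < 2^n"
  shows "int (card {d. d < 2^n \<and> Good a b d}) = F (2^n) a b"
proof -
  have N: "(16::nat) \<le> 2^n" using N16[OF assms(1)] .
  have ab: "xor a b < 2^n" using assms xor_lt by blast
  have sm: "xor c e < 2^n" if "c < (2::nat)^n" "e < 16" for c e
  proof -
    have "e < 2^n" using N that(2) by linarith
    thus ?thesis using xor_lt that(1) by blast
  qed
  have sub1: "xor c ` S \<subseteq> {..<2^n}" if "c < (2::nat)^n" "S \<subseteq> {..<16}" for c S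
  proof
    fix x assume "x \<in> xor c ` S"
    then obtain e where "e \<in> S" "x = xor c e" by blast
    thus "x \<in> {..<2^n}" using sm[OF that(1)] that(2) by auto
  qed
  have "D4 \<subseteq> {..<2^n}" using D_sub(4) N by auto
  hence Usub: "U a b \<subseteq> {..<2^n}"
    unfolding U_def using sub1[OF assms(2) D_sub(5)] sub1[OF assms(3) D_sub(6)] sub1[OF ab D_sub(7)]
    by blast
  have finU: "finite (U a b)" using Usub finite_subset by blast
  show ?thesis
  proof (cases "Qp a b")
    case True
    have "{d. d < 2^n \<and> Good a b d} = {..<2^n} - U a b"
      using True by (auto simp: Good_def Qp_def U_def xor_img_mem)
    hence "card {d. d < 2^n \<and> Good a b d} = 2^n - card (U a b)"
      using Usub by (simp add: card_Diff_subset finU)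
    moreover have "card (U a b) \<le> 2^n" using card_mono[OF _ Usub] by simp
    ultimately show ?thesis using True by (simp add: F_def of_nat_diff)
  next
    case False
    hence "{d. d < 2^n \<and> Good a b d} = {}" by (auto simp: Good_def Qp_def)
    thus ?thesis using False by (simp add: F_def)
  qed
qed

lemma card_Un_blk: assumes "finite X" "finite Y" "\<forall>x\<in>X. (x::nat) div 16 \<in> P" "\<forall>y\<in>Y. (y::nat) div 16 \<notin> P"
  shows "card (X \<union> Y) = card X + card Y"
proof -
  have "X \<inter> Y = {}" using assms(3,4) by blast
  thus ?thesis using card_Un_disjoint[OF assms(1,2)] by simp
qed

lemma caseB: assumes "a < 16" "16 \<le> b" shows "F N a b = G2 N a"
proof -
  have bd: "b div 16 \<noteq> 0" using assms(2) by auto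
  have ad: "a div 16 = 0" using assms(1) by simp
  have "xor a b div 16 = b div 16" by (simp add: xor_div16 ad)
  hence Q: "Qp a b \<longleftrightarrow> a \<notin> D1"
    using big_notin[OF D_sub(2) bd] big_notin[OF D_sub(3), of "xor a b"] bd by (auto simp: Qp_def)
  let ?A = "D4 \<union> xor a ` D5" and ?S = "D6 \<union> xor a ` D7"
  have "xor (xor a b) ` D7 = xor b ` xor a ` D7" by (simp only: xor_img_img xor.commute[of b a])
  hence Ueq: "U a b = ?A \<union> xor b ` ?S"
    unfolding U_def by auto
  have Asub: "?A \<subseteq> {..<16}" using D_sub(4) small_img[OF assms(1) D_sub(5)] by blast
  have Ssub: "?S \<subseteq> {..<16}" using D_sub(6) small_img[OF assms(1) D_sub(7)] by blast
  have "card (U a b) = card ?A + card (xor b ` ?S)"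
    unfolding Ueq
  proof (rule card_Un_blk[where P = "{0}"])
    show "finite ?A" "finite (xor b ` ?S)" using D_fin by auto
    show "\<forall>x\<in>?A. x div 16 \<in> {0}" using Asub by auto
    show "\<forall>y\<in>xor b ` ?S. y div 16 \<notin> {0}" using img_div[OF Ssub] bd by auto
  qed
  thus ?thesis unfolding F_def G2_def Q card_xor_img by simp
qed

lemma caseC: assumes "16 \<le> a" "b < 16" shows "F N a b = G3 N b"
proof -
  have ad: "a div 16 \<noteq> 0" using assms(1) by auto
  have bd: "b div 16 = 0" using assms(2) by simp
  have "xor a b div 16 = a div 16" by (simp add: xor_div16 bd)
  hence Q: "Qp a b \<longleftrightarrow> b \<notin> D2"
    using big_notin[OF D_sub(1) ad] big_notin[OF D_sub(3), of "xor a b"] ad by (auto simp: Qp_def)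
  let ?A = "D4 \<union> xor b ` D6" and ?S = "D5 \<union> xor b ` D7"
  have Ueq: "U a b = ?A \<union> xor a ` ?S"
    by (auto simp: U_def image_Un xor_img_img)
  have Asub: "?A \<subseteq> {..<16}" using D_sub(4) small_img[OF assms(2) D_sub(6)] by blast
  have Ssub: "?S \<subseteq> {..<16}" using D_sub(5) small_img[OF assms(2) D_sub(7)] by blast
  have "card (U a b) = card ?A + card (xor a ` ?S)"
    unfolding Ueq
  proof (rule card_Un_blk[where P = "{0}"])
    show "finite ?A" "finite (xor a ` ?S)" using D_fin by auto
    show "\<forall>x\<in>?A. x div 16 \<in> {0}" using Asub by auto
    show "\<forall>y\<in>xor a ` ?S. y div 16 \<notin> {0}" using img_div[OF Ssub] ad by auto
  qed
  thus ?thesis unfolding F_def G3_def Q card_xor_img by simp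
qed

lemma caseD: assumes "16 \<le> a" "a div 16 = b div 16" shows "F N a b = G4 N (xor a b)"
proof -
  define w where "w = xor a b"
  have ad: "a div 16 \<noteq> 0" using assms(1) by auto
  have bd: "b div 16 \<noteq> 0" using ad assms(2) by simp
  have "w div 16 = 0" unfolding w_def xor_div16 assms(2) by simp
  hence w16: "w < 16" by simp
  have bw: "b = xor a w" unfolding w_def by simp
  have Q: "Qp a b \<longleftrightarrow> w \<notin> D3"
    using big_notin[OF D_sub(1) ad] big_notin[OF D_sub(2) bd] by (auto simp: Qp_def w_def)
  let ?A = "D4 \<union> xor w ` D7" and ?S = "D5 \<union> xor w ` D6"
  have "xor b ` D6 = xor a ` xor w ` D6" unfolding bw xor_img_img ..
  hence Ueq: "U a b = ?A \<union> xor a ` ?S"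
    unfolding U_def w_def[symmetric] by auto
  have Asub: "?A \<subseteq> {..<16}" using D_sub(4) small_img[OF w16 D_sub(7)] by blast
  have Ssub: "?S \<subseteq> {..<16}" using D_sub(5) small_img[OF w16 D_sub(6)] by blast
  have "card (U a b) = card ?A + card (xor a ` ?S)"
    unfolding Ueq
  proof (rule card_Un_blk[where P = "{0}"])
    show "finite ?A" "finite (xor a ` ?S)" using D_fin by auto
    show "\<forall>x\<in>?A. x div 16 \<in> {0}" using Asub by auto
    show "\<forall>y\<in>xor a ` ?S. y div 16 \<notin> {0}" using img_div[OF Ssub] ad by auto
  qed
  thus ?thesis unfolding F_def G4_def Q card_xor_img w_def by simp
qed

lemma caseE: assumes "16 \<le> a" "16 \<le> b" "a div 16 \<noteq> b div 16" shows "F N a b = int N - 36"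
proof -
  define A where "A = a div 16"
  define B where "B = b div 16"
  define C where "C = xor a b div 16"
  have A0: "A \<noteq> 0" using assms(1) by (auto simp: A_def)
  have B0: "B \<noteq> 0" using assms(2) by (auto simp: B_def)
  have AB: "A \<noteq> B" using assms(3) by (simp add: A_def B_def)
  have C: "C = xor A B" by (simp add: C_def A_def B_def xor_div16)
  have C0: "C \<noteq> 0" using AB by (simp add: C xor_eq0)
  have CA: "C \<noteq> A"
  proof
    assume "C = A"
    hence "xor A (xor A B) = xor A A" by (simp add: C)
    thus False using B0 by simp
  qed
  have CB: "C \<noteq> B"
  proof
    assume "C = B"
    hence "xor B (xor B A) = xor B B" by (simp add: C xor.commute)
    thus False using A0 by simp
  qed
  have Q: "Qp a b"
    using big_notin[OF D_sub(1), of a] big_notin[OF D_sub(2), of b] big_notin[OF D_sub(3), of "xor a b"]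
      A0 B0 C0 by (auto simp: Qp_def A_def B_def C_def)
  have fin: "finite D4" "finite (xor a ` D5)" "finite (xor b ` D6)" "finite (xor (xor a b) ` D7)"
    using D_fin by auto
  have b4: "\<forall>x\<in>D4. x div 16 \<in> {0}" using D_sub(4) by auto
  have b5: "\<forall>x\<in>xor a ` D5. x div 16 = A" using img_div[OF D_sub(5)] A_def by auto
  have b6: "\<forall>x\<in>xor b ` D6. x div 16 = B" using img_div[OF D_sub(6)] B_def by auto
  have b7: "\<forall>x\<in>xor (xor a b) ` D7. x div 16 = C" using img_div[OF D_sub(7)] C_def by auto
  have "card (D4 \<union> xor a ` D5) = card D4 + card (xor a ` D5)"
    by (rule card_Un_blk[where P = "{0}", OF fin(1,2) b4]) (use b5 A0 in auto)
  moreover have "card ((D4 \<union> xor a ` D5) \<union> xor b ` D6) = card (D4 \<union> xor a ` D5) + card (xor b ` D6)"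
    by (rule card_Un_blk[where P = "{0,A}"]) (use fin b4 b5 b6 B0 AB in auto)
  moreover have "card (((D4 \<union> xor a ` D5) \<union> xor b ` D6) \<union> xor (xor a b) ` D7)
      = card ((D4 \<union> xor a ` D5) \<union> xor b ` D6) + card (xor (xor a b) ` D7)"
    by (rule card_Un_blk[where P = "{0,A,B}"]) (use fin b4 b5 b6 b7 C0 CA CB in auto)
  ultimately have "card (U a b) = 36"
    unfolding U_def by (simp add: card_xor_img D_card)
  thus ?thesis using Q by (simp add: F_def)
qed

lemma split16: "(16::nat) \<le> N \<Longrightarrow> {..<N} = {..<16} \<union> {16..<N}" by auto

lemma sumB: assumes "4 \<le> n" "a < 16"
  shows "(\<Sum>b<2^n. F (2^n) a b) = (\<Sum>b<16. F (2^n) a b) + (int (2^n) - 16) * G2 (2^n) a"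
proof -
  have N: "(16::nat) \<le> 2^n" using N16[OF assms(1)] .
  have "(\<Sum>b<2^n. F (2^n) a b) = (\<Sum>b<16. F (2^n) a b) + (\<Sum>b\<in>{16..<2^n}. F (2^n) a b)"
    unfolding split16[OF N] by (rule sum.union_disjoint) auto
  also have "(\<Sum>b\<in>{16..<2^n}. F (2^n) a b) = (\<Sum>b\<in>{16..<(2::nat)^n}. G2 (2^n) a)"
    using caseB[OF assms(2)] by (intro sum.cong) auto
  also have "\<dots> = (int (2^n) - 16) * G2 (2^n) a" using N by (simp add: of_nat_diff)
  finally show ?thesis .
qed

lemma sumCDE: assumes "4 \<le> n" "16 \<le> a" "a < 2^n"
  shows "(\<Sum>b<2^n. F (2^n) a b) = (\<Sum>b<16. G3 (2^n) b) + (\<Sum>w<16. G4 (2^n) w)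
     + (int (2^n) - 32) * (int (2^n) - 36)"
proof -
  have N: "(16::nat) \<le> 2^n" using N16[OF assms(1)] .
  define Blk where "Blk = xor a ` {..<16}"
  define Rest where "Rest = {16..<2^n} - Blk"
  have ad: "a div 16 \<noteq> 0" using assms(2) by auto
  have Blk_sub: "Blk \<subseteq> {16..<2^n}"
  proof
    fix x assume "x \<in> Blk"
    then obtain w where w: "w < 16" "x = xor a w" by (auto simp: Blk_def)
    have "x div 16 = a div 16" using w xor_small_div by simp
    hence "16 \<le> x" using ad by auto
    moreover have "w < 2^n" using w N by linarith
    hence "x < 2^n" using w assms(3) xor_lt by simp
    ultimately show "x \<in> {16..<2^n}" by simp
  qed
  have cBlk: "card Blk = 16" unfolding Blk_def by (simp add: card_xor_img)
  have eq: "{..<2^n} = {..<16} \<union> (Blk \<union> Rest)" using split16[OF N] Blk_sub by (auto simp: Rest_def)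
  have "(\<Sum>b<2^n. F (2^n) a b) = (\<Sum>b<16. F (2^n) a b) + (\<Sum>b\<in>Blk \<union> Rest. F (2^n) a b)"
    unfolding eq using Blk_sub by (intro sum.union_disjoint) (auto simp: Rest_def Blk_def)
  also have "(\<Sum>b\<in>Blk \<union> Rest. F (2^n) a b) = (\<Sum>b\<in>Blk. F (2^n) a b) + (\<Sum>b\<in>Rest. F (2^n) a b)"
    by (intro sum.union_disjoint) (auto simp: Rest_def Blk_def)
  also have "(\<Sum>b<16. F (2^n) a b) = (\<Sum>b<16. G3 (2^n) b)"
    using caseC[OF assms(2)] by (intro sum.cong) auto
  also have "(\<Sum>b\<in>Blk. F (2^n) a b) = (\<Sum>w<16. F (2^n) a (xor a w))"
    unfolding Blk_def by (rule sum.reindex[OF inj_xor, unfolded comp_def])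
  also have "\<dots> = (\<Sum>w<16. G4 (2^n) w)"
  proof (rule sum.cong)
    fix w assume "w \<in> {..<(16::nat)}"
    hence "a div 16 = xor a w div 16" using xor_small_div by simp
    thus "F (2^n) a (xor a w) = G4 (2^n) w" using caseD[OF assms(2)] by simp
  qed simp
  also have "(\<Sum>b\<in>Rest. F (2^n) a b) = (\<Sum>b\<in>Rest. int (2^n) - 36)"
  proof (rule sum.cong)
    fix b assume b: "b \<in> Rest"
    have "a div 16 \<noteq> b div 16"
    proof
      assume h: "a div 16 = b div 16"
      have "xor a b div 16 = 0" by (simp add: xor_div16 h)
      hence "xor a b < 16" by simp
      hence "xor a (xor a b) \<in> Blk" unfolding Blk_def by blast
      thus False using b by (simp add: Rest_def)
    qed
    thus "F (2^n) a b = int (2^n) - 36" using caseE[OF assms(2)] b by (simp add: Rest_def)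
  qed simp
  also have "\<dots> = int (card Rest) * (int (2^n) - 36)" by simp
  also have "int (card Rest) = int (2^n) - 32"
  proof -
    have "card Rest = card {16..<(2::nat)^n} - card Blk"
      unfolding Rest_def by (rule card_Diff_subset) (use Blk_sub in \<open>auto simp: Blk_def\<close>)
    moreover have "card Blk \<le> card {16..<(2::nat)^n}" by (rule card_mono) (use Blk_sub in auto)
    ultimately show ?thesis using cBlk N by (simp add: of_nat_diff)
  qed
  finally show ?thesis by simp
qed

lemma count_T: assumes "4 \<le> n"
  shows "int (card (Tset (2^n))) = 7 * int (2^n) - 102 + (int (2^n) - 16) * (7 * int (2^n) - 192)
     + (int (2^n) - 16) * (8 * int (2^n) - 210 + (int (2^n) - 32) * (int (2^n) - 36))"
proof -
  have N: "(16::nat) \<le> 2^n" using N16[OF assms(1)] .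
  have "int (card (Tset (2^n))) = (\<Sum>a<2^n. \<Sum>b<2^n. F (2^n) a b)"
    unfolding card_T of_nat_sum using inner[OF assms(1)] by (intro sum.cong) auto
  also have "\<dots> = (\<Sum>a<16. \<Sum>b<2^n. F (2^n) a b) + (\<Sum>a\<in>{16..<2^n}. \<Sum>b<2^n. F (2^n) a b)"
    unfolding split16[OF N] by (rule sum.union_disjoint) auto
  also have "(\<Sum>a<16. \<Sum>b<2^n. F (2^n) a b)
      = (\<Sum>a<16. (\<Sum>b<16. F (2^n) a b) + (int (2^n) - 16) * G2 (2^n) a)"
    using sumB[OF assms(1)] by (intro sum.cong) auto
  also have "\<dots> = 7 * int (2^n) - 102 + (int (2^n) - 16) * (7 * int (2^n) - 192)"
    by (simp add: sum.distrib S1 S2 flip: sum_distrib_left)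
  also have "(\<Sum>a\<in>{16..<2^n}. \<Sum>b<2^n. F (2^n) a b)
      = (\<Sum>a\<in>{16..<(2::nat)^n}. 8 * int (2^n) - 210 + (int (2^n) - 32) * (int (2^n) - 36))"
    using sumCDE[OF assms(1)] by (intro sum.cong) (auto simp: S3 S4)
  also have "\<dots> = (int (2^n) - 16) * (8 * int (2^n) - 210 + (int (2^n) - 32) * (int (2^n) - 36))"
    using N by (simp add: of_nat_diff)
  finally show ?thesis .
qed

theorem mainTheorem8:
  fixes n :: nat
  assumes "n \<ge> 4"
  shows "int (card {M \<in> quad_squares n. is_magic M \<and> is_typeC M}) =
    10 + 85 * (2^n - 16) + 43 * (2^n - 16) * (2^n - 32)
       + (2^n - 16) * (2^n - 32) * (2^n - 64)"
  unfolding card_LHS[OF assms] count_T[OF assms] by (simp add: algebra_simps)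

end
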